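(* Assume additionally that $K$ is nonincreasing on $[0,\infty)$ (as for the uniform, Epanechnikov, triangle, tricube, biweight kernels), and that the ABC normalizing constant $Z=\iint\pi(\theta)p(x\mid\theta)K_\varepsilon(\Delta(x,y))dx\,d\theta$ is positive. Let $a\in[0,1)$ and let $h=h_a:\Theta\to\mathbb{R}$ be a discrepancy function such that $$\sup_{\theta\in\Theta_1\setminus\mathcal{N}_{\Theta_1}}\int p(x\mid\theta)\,\mathbb{I}\big(\Delta(x,y)\le h(\theta)\big)\,dx\le a$$ for some Lebesgue-null subset $\mathcal{N}_{\Theta_1}\subset\Theta_1$, where $\Theta_1=\{\theta:\pi_\varepsilon(\theta\mid y)>0\}$, and such that the normalizing constant of $\hat\pi_\varepsilon$ is positive. Then the $L_1$ distance $D_{L_1}(\hat\pi_\varepsilon(\cdot\mid y),\pi_\varepsilon(\cdot\mid y))=\int|\hat\pi_\varepsilon(\theta\mid y)-\pi_\varepsilon(\theta\mid y)|d\theta$ between the ejMCMC target marginal and the ABC posterior tends to $0$ as $a\to 0$ (uniformly over all such families $h_a$).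
   Context: Setting: $\theta\in\Theta\subset\mathbb{R}^p$ with prior density $\pi$; data density $p(x\mid\theta)$; observed data $y$; discrepancy $\Delta(x,y)\ge0$; $K$ a centered kernel density with maximum at $0$ and $K(z)=0$ for $z>1$, $K_\varepsilon(u)=K(u/\varepsilon)/K(0)$, tolerance $\varepsilon>0$. ABC posterior: $\pi_\varepsilon(\theta\mid y)\propto\pi(\theta)\int p(x\mid\theta)K_\varepsilon(\Delta(x,y))dx$. ejMCMC target marginal: $\hat\pi_\varepsilon(\theta\mid y)\propto\pi(\theta)\int p(x\mid\theta)\min\{K_\varepsilon(\Delta(x,y)),K_\varepsilon(h(\theta))\}dx$ (each normalized to integrate to 1 over $\Theta$). *)

theory Defs
  imports "HOL-Analysis.Analysis"
begin

definition Keps :: "(real \<Rightarrow> real) \<Rightarrow> real \<Rightarrow> real \<Rightarrow> real" where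
  "Keps K eps u = K (u / eps) / K 0"

definition abc_unnorm ::
  "('a::euclidean_space \<Rightarrow> real) \<Rightarrow> ('a \<Rightarrow> 'b::euclidean_space \<Rightarrow> real) \<Rightarrow>
   (real \<Rightarrow> real) \<Rightarrow> real \<Rightarrow> ('b \<Rightarrow> 'b \<Rightarrow> real) \<Rightarrow> 'b \<Rightarrow> 'a \<Rightarrow> real" where
  "abc_unnorm prior p K eps \<Delta> y \<theta> =
     prior \<theta> * (\<integral>x. p \<theta> x * Keps K eps (\<Delta> x y) \<partial>lborel)"

definition ej_unnorm ::
  "('a::euclidean_space \<Rightarrow> real) \<Rightarrow> ('a \<Rightarrow> 'b::euclidean_space \<Rightarrow> real) \<Rightarrow>
   (real \<Rightarrow> real) \<Rightarrow> real \<Rightarrow> ('b \<Rightarrow> 'b \<Rightarrow> real) \<Rightarrow> 'b \<Rightarrow> ('a \<Rightarrow> real) \<Rightarrow> 'a \<Rightarrow> real" where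
  "ej_unnorm prior p K eps \<Delta> y h \<theta> =
     prior \<theta> * (\<integral>x. p \<theta> x * min (Keps K eps (\<Delta> x y)) (Keps K eps (h \<theta>)) \<partial>lborel)"

definition normalize_on :: "'a::euclidean_space set \<Rightarrow> ('a \<Rightarrow> real) \<Rightarrow> 'a \<Rightarrow> real" where
  "normalize_on \<Theta> f \<theta> = f \<theta> / (\<integral>t\<in>\<Theta>. f t \<partial>lborel)"

definition abc_post where
  "abc_post \<Theta> prior p K eps \<Delta> y = normalize_on \<Theta> (abc_unnorm prior p K eps \<Delta> y)"

definition ej_post where
  "ej_post \<Theta> prior p K eps \<Delta> y h = normalize_on \<Theta> (ej_unnorm prior p K eps \<Delta> y h)"

definition L1_dist :: "'a::euclidean_space set \<Rightarrow> ('a \<Rightarrow> real) \<Rightarrow> ('a \<Rightarrow> real) \<Rightarrow> real" where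
  "L1_dist \<Theta> f g = (\<integral>t\<in>\<Theta>. \<bar>f t - g t\<bar> \<partial>lborel)"

end

theory Submission
  imports Defs
begin

theorem proposition2:
  fixes \<Theta> :: "'a::euclidean_space set"
    and prior :: "'a \<Rightarrow> real"
    and p :: "'a \<Rightarrow> 'b::euclidean_space \<Rightarrow> real"
    and K :: "real \<Rightarrow> real"
    and \<Delta> :: "'b \<Rightarrow> 'b \<Rightarrow> real"
    and y :: 'b
    and eps :: real
  assumes Theta_meas: "\<Theta> \<in> sets lborel"
    and prior_nonneg: "\<And>\<theta>. \<theta> \<in> \<Theta> \<Longrightarrow> 0 \<le> prior \<theta>"
    and prior_meas: "prior \<in> borel_measurable lborel"
    and prior_int: "set_integrable lborel \<Theta> prior"
    and prior_one: "(\<integral>\<theta>\<in>\<Theta>. prior \<theta> \<partial>lborel) = 1"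
    and p_meas: "(\<lambda>(\<theta>, x). p \<theta> x) \<in> borel_measurable (lborel \<Otimes>\<^sub>M lborel)"
    and p_nonneg: "\<And>\<theta> x. \<theta> \<in> \<Theta> \<Longrightarrow> 0 \<le> p \<theta> x"
    and p_int: "\<And>\<theta>. \<theta> \<in> \<Theta> \<Longrightarrow> integrable lborel (p \<theta>)"
    and p_one: "\<And>\<theta>. \<theta> \<in> \<Theta> \<Longrightarrow> (\<integral>x. p \<theta> x \<partial>lborel) = 1"
    and Delta_nonneg: "\<And>x z. 0 \<le> \<Delta> x z"
    and Delta_meas: "(\<lambda>x. \<Delta> x y) \<in> borel_measurable lborel"
    and K_meas: "K \<in> borel_measurable borel"
    and K_nonneg: "\<And>z. 0 \<le> K z"
    and K_int: "integrable lborel K"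
    and K_one: "(\<integral>z. K z \<partial>lborel) = 1"
    and K_centered: "integrable lborel (\<lambda>z. z * K z)" "(\<integral>z. z * K z \<partial>lborel) = 0"
    and K_max: "\<And>z. K z \<le> K 0"
    and K_supp: "\<And>z. z > 1 \<Longrightarrow> K z = 0"
    and K_noninc: "\<And>u v. 0 \<le> u \<Longrightarrow> u \<le> v \<Longrightarrow> K v \<le> K u"
    and eps_pos: "eps > 0"
    and Z_pos: "(\<integral>\<theta>\<in>\<Theta>. abc_unnorm prior p K eps \<Delta> y \<theta> \<partial>lborel) > 0"
  shows "\<forall>e>0. \<exists>\<delta>>0. \<forall>(a::real) (h::'a \<Rightarrow> real).
           0 \<le> a \<and> a < 1 \<and> a < \<delta>
           \<and> h \<in> borel_measurable lborel
           \<and> (\<forall>\<theta>. 0 \<le> h \<theta>)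
           \<and> (\<exists>N. N \<in> null_sets lborel
                  \<and> N \<subseteq> {\<theta>\<in>\<Theta>. abc_post \<Theta> prior p K eps \<Delta> y \<theta> > 0}
                  \<and> (\<forall>\<theta>\<in>{\<theta>\<in>\<Theta>. abc_post \<Theta> prior p K eps \<Delta> y \<theta> > 0} - N.
                       (\<integral>x. p \<theta> x * indicator {x. \<Delta> x y \<le> h \<theta>} x \<partial>lborel) \<le> a))
           \<and> (\<integral>\<theta>\<in>\<Theta>. ej_unnorm prior p K eps \<Delta> y h \<theta> \<partial>lborel) > 0
           \<longrightarrow> L1_dist \<Theta> (ej_post \<Theta> prior p K eps \<Delta> y h) (abc_post \<Theta> prior p K eps \<Delta> y) < e"
proof (intro allI impI)
  fix e :: real assume e: "e > 0"
  define f where "f = abc_unnorm prior p K eps \<Delta> y"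
  define Z where "Z = (\<integral>\<theta>\<in>\<Theta>. f \<theta> \<partial>lborel)"
  have Zpos: "Z > 0" using Z_pos by (simp add: Z_def f_def)
  have f_int: "set_integrable lborel \<Theta> f"
  proof (rule ccontr)
    assume "\<not> ?thesis"
    then have "Z = 0" unfolding Z_def set_integrable_def set_lebesgue_integral_def
      by (simp add: not_integrable_integral_eq)
    then show False using Zpos by simp
  qed
  have Ke0: "0 \<le> Keps K eps u" for u
    unfolding Keps_def using K_nonneg[of 0] K_nonneg by simp
  have Ke1: "Keps K eps u \<le> 1" for u
  proof (cases "K 0 = 0")
    case True then show ?thesis by (simp add: Keps_def)
  next
    case False then have "K 0 > 0" using K_nonneg[of 0] by simp
    then show ?thesis using K_max[of "u/eps"] by (simp add: Keps_def)
  qed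
  have Kmono: "Keps K eps u \<le> Keps K eps v" if "0 \<le> v" "v \<le> u" for u v
    unfolding Keps_def
    by (rule divide_right_mono[OF K_noninc], use that eps_pos K_nonneg[of 0] in \<open>auto simp: divide_right_mono\<close>)
  have Kmeas: "(\<lambda>x. Keps K eps (\<Delta> x y)) \<in> borel_measurable lborel"
    unfolding Keps_def
    by (intro borel_measurable_divide measurable_compose[OF _ K_meas] borel_measurable_divide Delta_meas) auto
  have pmeas: "p \<theta> \<in> borel_measurable lborel" if "\<theta> \<in> \<Theta>" for \<theta>
    using p_int[OF that] by auto
  have int1: "integrable lborel (\<lambda>x. p \<theta> x * Keps K eps (\<Delta> x y))" if "\<theta> \<in> \<Theta>" for \<theta>
    by (rule Bochner_Integration.integrable_bound[OF p_int[OF that]])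
       (use pmeas[OF that] Kmeas p_nonneg[OF that] Ke0 Ke1 in \<open>auto intro!: mult_left_le\<close>)
  have int2: "integrable lborel (\<lambda>x. p \<theta> x * min (Keps K eps (\<Delta> x y)) (Keps K eps c))" if "\<theta> \<in> \<Theta>" for \<theta> c
    by (rule Bochner_Integration.integrable_bound[OF p_int[OF that]])
       (use pmeas[OF that] Kmeas p_nonneg[OF that] Ke0 Ke1 in \<open>auto intro!: mult_left_le simp: min_def\<close>)
  have int3: "integrable lborel (\<lambda>x. p \<theta> x * indicator {x. \<Delta> x y \<le> c} x)" if "\<theta> \<in> \<Theta>" for \<theta> c
  proof (rule Bochner_Integration.integrable_bound[OF p_int[OF that]])
    have "{x. \<Delta> x y \<le> c} \<in> sets lborel" using Delta_meas by measurable
    then show "(\<lambda>x. p \<theta> x * indicator {x. \<Delta> x y \<le> c} x) \<in> borel_measurable lborel"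
      using pmeas[OF that] by measurable
    show "AE x in lborel. norm (p \<theta> x * indicator {x. \<Delta> x y \<le> c} x) \<le> norm (p \<theta> x)"
      using p_nonneg[OF that] by (auto simp: indicator_def)
  qed
  show "\<exists>\<delta>>0. \<forall>(a::real) (h::'a \<Rightarrow> real).
           0 \<le> a \<and> a < 1 \<and> a < \<delta>
           \<and> h \<in> borel_measurable lborel
           \<and> (\<forall>\<theta>. 0 \<le> h \<theta>)
           \<and> (\<exists>N. N \<in> null_sets lborel
                  \<and> N \<subseteq> {\<theta>\<in>\<Theta>. abc_post \<Theta> prior p K eps \<Delta> y \<theta> > 0}
                  \<and> (\<forall>\<theta>\<in>{\<theta>\<in>\<Theta>. abc_post \<Theta> prior p K eps \<Delta> y \<theta> > 0} - N.
                       (\<integral>x. p \<theta> x * indicator {x. \<Delta> x y \<le> h \<theta>} x \<partial>lborel) \<le> a))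
           \<and> (\<integral>\<theta>\<in>\<Theta>. ej_unnorm prior p K eps \<Delta> y h \<theta> \<partial>lborel) > 0
           \<longrightarrow> L1_dist \<Theta> (ej_post \<Theta> prior p K eps \<Delta> y h) (abc_post \<Theta> prior p K eps \<Delta> y) < e"
  proof (rule exI[where x="e * Z / 2"], intro conjI allI impI)
    show "e * Z / 2 > 0" using e Zpos by simp
    fix a :: real and h :: "'a \<Rightarrow> real"
    assume H: "0 \<le> a \<and> a < 1 \<and> a < e * Z / 2
           \<and> h \<in> borel_measurable lborel
           \<and> (\<forall>\<theta>. 0 \<le> h \<theta>)
           \<and> (\<exists>N. N \<in> null_sets lborel
                  \<and> N \<subseteq> {\<theta>\<in>\<Theta>. abc_post \<Theta> prior p K eps \<Delta> y \<theta> > 0}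
                  \<and> (\<forall>\<theta>\<in>{\<theta>\<in>\<Theta>. abc_post \<Theta> prior p K eps \<Delta> y \<theta> > 0} - N.
                       (\<integral>x. p \<theta> x * indicator {x. \<Delta> x y \<le> h \<theta>} x \<partial>lborel) \<le> a))
           \<and> (\<integral>\<theta>\<in>\<Theta>. ej_unnorm prior p K eps \<Delta> y h \<theta> \<partial>lborel) > 0"
    define g where "g = ej_unnorm prior p K eps \<Delta> y h"
    define W where "W = (\<integral>\<theta>\<in>\<Theta>. g \<theta> \<partial>lborel)"
    have a0: "0 \<le> a" and aZ: "a < e * Z / 2" and h0: "\<And>\<theta>. 0 \<le> h \<theta>" using H by auto
    have Wpos: "W > 0" using H by (simp add: W_def g_def)
    obtain N where N: "N \<in> null_sets lborel"
      "\<And>\<theta>. \<theta> \<in> \<Theta> \<Longrightarrow> abc_post \<Theta> prior p K eps \<Delta> y \<theta> > 0 \<Longrightarrow> \<theta> \<notin> N \<Longrightarrow>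
         (\<integral>x. p \<theta> x * indicator {x. \<Delta> x y \<le> h \<theta>} x \<partial>lborel) \<le> a"
      using H by blast
    have g_int: "set_integrable lborel \<Theta> g"
    proof (rule ccontr)
      assume "\<not> ?thesis"
      then have "W = 0" unfolding W_def set_integrable_def set_lebesgue_integral_def
        by (simp add: not_integrable_integral_eq)
      then show False using Wpos by simp
    qed
    have g0: "0 \<le> g \<theta>" if "\<theta> \<in> \<Theta>" for \<theta>
      unfolding g_def ej_unnorm_def using prior_nonneg[OF that] p_nonneg[OF that] Ke0
      by (intro mult_nonneg_nonneg integral_nonneg_AE) auto
    have f0: "0 \<le> f \<theta>" if "\<theta> \<in> \<Theta>" for \<theta>
      unfolding f_def abc_unnorm_def using prior_nonneg[OF that] p_nonneg[OF that] Ke0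
      by (intro mult_nonneg_nonneg integral_nonneg_AE) auto
    have fg_diff: "f \<theta> - g \<theta> = prior \<theta> * (\<integral>x. p \<theta> x * Keps K eps (\<Delta> x y)
          - p \<theta> x * min (Keps K eps (\<Delta> x y)) (Keps K eps (h \<theta>)) \<partial>lborel)"
      if "\<theta> \<in> \<Theta>" for \<theta>
      unfolding f_def g_def abc_unnorm_def ej_unnorm_def
      by (subst Bochner_Integration.integral_diff[OF int1[OF that] int2[OF that]]) (simp add: algebra_simps)
    have gf: "g \<theta> \<le> f \<theta>" if "\<theta> \<in> \<Theta>" for \<theta>
    proof -
      have "0 \<le> (\<integral>x. p \<theta> x * Keps K eps (\<Delta> x y)
          - p \<theta> x * min (Keps K eps (\<Delta> x y)) (Keps K eps (h \<theta>)) \<partial>lborel)"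
        using p_nonneg[OF that] by (intro integral_nonneg_AE) (auto intro!: mult_left_mono)
      then have "0 \<le> f \<theta> - g \<theta>" using fg_diff[OF that] prior_nonneg[OF that] by simp
      then show ?thesis by simp
    qed
    have diff_bd: "f \<theta> - g \<theta> \<le> a * prior \<theta>"
      if th: "\<theta> \<in> \<Theta>" "\<theta> \<notin> N" for \<theta>
    proof (cases "abc_post \<Theta> prior p K eps \<Delta> y \<theta> > 0")
      case False
      then have "f \<theta> \<le> 0" using Zpos
        by (simp add: abc_post_def normalize_on_def f_def[symmetric] Z_def[symmetric] zero_less_divide_iff)
      then have "f \<theta> = 0" using f0[OF th(1)] by simp
      moreover have "g \<theta> \<ge> 0" using g0[OF th(1)] .
      ultimately show ?thesis using a0 prior_nonneg[OF th(1)] by (smt (verit) mult_nonneg_nonneg)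
    next
      case True
      have pw: "p \<theta> x * Keps K eps (\<Delta> x y) - p \<theta> x * min (Keps K eps (\<Delta> x y)) (Keps K eps (h \<theta>))
            \<le> p \<theta> x * indicator {x. \<Delta> x y \<le> h \<theta>} x" for x
      proof (cases "\<Delta> x y \<le> h \<theta>")
        case True
        have "Keps K eps (\<Delta> x y) - min (Keps K eps (\<Delta> x y)) (Keps K eps (h \<theta>)) \<le> 1"
          using Ke0[of "h \<theta>"] Ke1[of "\<Delta> x y"] Ke0[of "\<Delta> x y"] by (simp add: min_def)
        then have "p \<theta> x * (Keps K eps (\<Delta> x y) - min (Keps K eps (\<Delta> x y)) (Keps K eps (h \<theta>))) \<le> p \<theta> x * 1"
          using p_nonneg[OF th(1)] by (intro mult_left_mono) auto
        then show ?thesis using True by (simp add: algebra_simps)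
      next
        case False
        then have "Keps K eps (\<Delta> x y) \<le> Keps K eps (h \<theta>)" using h0[of \<theta>] by (intro Kmono) auto
        then show ?thesis using False by (simp add: min_def)
      qed
      have "(\<integral>x. p \<theta> x * Keps K eps (\<Delta> x y)
          - p \<theta> x * min (Keps K eps (\<Delta> x y)) (Keps K eps (h \<theta>)) \<partial>lborel)
          \<le> (\<integral>x. p \<theta> x * indicator {x. \<Delta> x y \<le> h \<theta>} x \<partial>lborel)"
        by (rule integral_mono[OF Bochner_Integration.integrable_diff[OF int1[OF th(1)] int2[OF th(1)]] int3[OF th(1)] pw])
      also have "\<dots> \<le> a" using N(2)[OF th(1) True th(2)] .
      finally have "prior \<theta> * (\<integral>x. p \<theta> x * Keps K eps (\<Delta> x y)
          - p \<theta> x * min (Keps K eps (\<Delta> x y)) (Keps K eps (h \<theta>)) \<partial>lborel) \<le> prior \<theta> * a"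
        using prior_nonneg[OF th(1)] by (intro mult_left_mono)
      then show ?thesis using fg_diff[OF th(1)] by (simp add: mult.commute)
    qed
    have WZ: "W \<le> Z" unfolding W_def Z_def by (rule set_integral_mono[OF g_int f_int gf])
    have ZW: "Z - W \<le> a"
    proof -
      have "Z - W = (\<integral>\<theta>\<in>\<Theta>. f \<theta> - g \<theta> \<partial>lborel)"
        unfolding Z_def W_def by (simp add: set_integral_diff(2)[OF f_int g_int])
      also have "\<dots> \<le> (\<integral>\<theta>\<in>\<Theta>. a * prior \<theta> \<partial>lborel)"
      proof (rule set_integral_mono_AE[OF set_integral_diff(1)[OF f_int g_int]])
        show "set_integrable lborel \<Theta> (\<lambda>\<theta>. a * prior \<theta>)" using prior_int by auto
        show "AE \<theta>\<in>\<Theta> in lborel. f \<theta> - g \<theta> \<le> a * prior \<theta>"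
          using AE_not_in[OF N(1)] by eventually_elim (use diff_bd in auto)
      qed
      also have "\<dots> = a" using prior_one by simp
      finally show ?thesis .
    qed
    have bound: "\<bar>g \<theta> / W - f \<theta> / Z\<bar> \<le> g \<theta> * (1 / W - 1 / Z) + (f \<theta> - g \<theta>) / Z"
      if "\<theta> \<in> \<Theta>" for \<theta>
    proof -
      have "g \<theta> / W - f \<theta> / Z = g \<theta> * (1 / W - 1 / Z) - (f \<theta> - g \<theta>) / Z"
        by (simp add: right_diff_distrib diff_divide_distrib)
      moreover have "0 \<le> g \<theta> * (1 / W - 1 / Z)"
        using g0[OF that] WZ Wpos by (intro mult_nonneg_nonneg) (auto simp: field_simps)
      moreover have "0 \<le> (f \<theta> - g \<theta>) / Z" using gf[OF that] Zpos by simp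
      ultimately show ?thesis by linarith
    qed
    have int_rhs: "set_integrable lborel \<Theta> (\<lambda>\<theta>. g \<theta> * (1 / W - 1 / Z) + (f \<theta> - g \<theta>) / Z)"
      using g_int f_int by (intro set_integral_add(1) set_integrable_mult_left set_integrable_divide set_integral_diff(1)) auto
    have int_lhs: "set_integrable lborel \<Theta> (\<lambda>\<theta>. \<bar>g \<theta> / W - f \<theta> / Z\<bar>)"
      using g_int f_int by (intro set_integrable_abs set_integral_diff(1) set_integrable_divide) auto
    have "L1_dist \<Theta> (ej_post \<Theta> prior p K eps \<Delta> y h) (abc_post \<Theta> prior p K eps \<Delta> y)
        = (\<integral>\<theta>\<in>\<Theta>. \<bar>g \<theta> / W - f \<theta> / Z\<bar> \<partial>lborel)"
      by (simp add: L1_dist_def ej_post_def abc_post_def normalize_on_def f_def[symmetric] g_def[symmetric]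
          Z_def[symmetric] W_def[symmetric])
    also have "\<dots> \<le> (\<integral>\<theta>\<in>\<Theta>. g \<theta> * (1 / W - 1 / Z) + (f \<theta> - g \<theta>) / Z \<partial>lborel)"
      by (rule set_integral_mono[OF int_lhs int_rhs bound])
    also have "\<dots> = W * (1 / W - 1 / Z) + (Z - W) / Z"
      using g_int f_int
      by (simp add: set_integral_add(2) set_integral_diff set_integrable_divide W_def Z_def)
    also have "\<dots> = 2 * (Z - W) / Z" using Wpos Zpos by (simp add: field_simps)
    also have "\<dots> \<le> 2 * a / Z" using ZW Zpos by (simp add: divide_right_mono)
    also have "\<dots> < e" using aZ Zpos by (simp add: field_simps)
    finally show "L1_dist \<Theta> (ej_post \<Theta> prior p K eps \<Delta> y h) (abc_post \<Theta> prior p K eps \<Delta> y) < e" .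
  qed
qed

end
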